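(* Let $(\sigma_k)_{k\ge1}$ be a sequence of nonnegative real numbers with mean $\sigma$, i.e. $\lim_{n\to\infty}\frac1n\sum_{k=1}^n\sigma_k=\sigma$. Fix constants $0\le\gamma<\delta<1$. Then \[ \lim_{n\to\infty}\frac1n\sum_{k=\lceil\gamma n\rceil}^{\lfloor\delta n\rfloor}\sigma_k\left(1-\frac kn\right)^{\sigma-1}=(1-\gamma)^\sigma-(1-\delta)^\sigma. \] *)

theory Defs
  imports "HOL-Analysis.Analysis"
begin

end

theory Submission
  imports Defs
begin

lemma abel_sum:
  fixes T g :: "nat \<Rightarrow> real"
  assumes "1 \<le> A" "A \<le> B"
  shows "(\<Sum>k=A..B. (T k - T (k-1)) * g k) = T B * g B - T (A-1) * g A + (\<Sum>k=A..<B. T k * (g k - g (Suc k)))"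
  using assms(2)
proof (induction B rule: dec_induct)
  case base
  then show ?case by (simp add: algebra_simps)
next
  case (step n)
  have "(\<Sum>k=A..Suc n. (T k - T (k-1)) * g k) = (\<Sum>k=A..n. (T k - T (k-1)) * g k) + (T (Suc n) - T n) * g (Suc n)"
    using step.hyps by (simp add: sum.cl_ivl_Suc)
  also have "(\<Sum>k=A..<Suc n. T k * (g k - g (Suc k))) = (\<Sum>k=A..<n. T k * (g k - g (Suc k))) + T n * (g n - g (Suc n))"
    using step.hyps by simp
  ultimately show ?case using step.IH by (simp add: algebra_simps)
qed

lemma var_sum:
  fixes h :: "nat \<Rightarrow> real"
  assumes "A \<le> B"
    and mono: "(\<forall>k. A \<le> k \<and> k < B \<longrightarrow> h (Suc k) \<le> h k) \<or> (\<forall>k. A \<le> k \<and> k < B \<longrightarrow> h k \<le> h (Suc k))"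
  shows "(\<Sum>k=A..<B. \<bar>h k - h (Suc k)\<bar>) = \<bar>h A - h B\<bar>"
  using mono
proof
  assume H: "\<forall>k. A \<le> k \<and> k < B \<longrightarrow> h (Suc k) \<le> h k"
  have "(\<Sum>k=A..<B. \<bar>h k - h (Suc k)\<bar>) = (\<Sum>k=A..<B. (\<lambda>k. - h k) (Suc k) - (\<lambda>k. - h k) k)"
    using H by (intro sum.cong) auto
  also have "\<dots> = h A - h B" using sum_Suc_diff'[OF assms(1), of "\<lambda>k. - h k"] by simp
  also have "h A - h B \<ge> 0"
  proof -
    have "\<forall>j. A \<le> j \<and> j \<le> B \<longrightarrow> h j \<le> h A"
    proof (intro allI impI)
      fix j assume "A \<le> j \<and> j \<le> B"
      then show "h j \<le> h A"
      proof (induction j rule: nat.induct)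
        case zero then show ?case by simp
      next
        case (Suc j)
        then show ?case using H by (cases "A = Suc j") (auto simp: le_Suc_eq)
      qed
    qed
    then show ?thesis using assms(1) by auto
  qed
  ultimately show ?thesis by simp
next
  assume H: "\<forall>k. A \<le> k \<and> k < B \<longrightarrow> h k \<le> h (Suc k)"
  have "(\<Sum>k=A..<B. \<bar>h k - h (Suc k)\<bar>) = (\<Sum>k=A..<B. h (Suc k) - h k)"
    using H by (intro sum.cong) auto
  also have "\<dots> = h B - h A" using sum_Suc_diff'[OF assms(1), of h] by simp
  also have "h B - h A \<ge> 0"
  proof -
    have "\<forall>j. A \<le> j \<and> j \<le> B \<longrightarrow> h A \<le> h j"
    proof (intro allI impI)
      fix j assume "A \<le> j \<and> j \<le> B"
      then show "h A \<le> h j"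
      proof (induction j rule: nat.induct)
        case zero then show ?case by simp
      next
        case (Suc j)
        then show ?case using H by (cases "A = Suc j") (auto simp: le_Suc_eq)
      qed
    qed
    then show ?thesis using assms(1) by auto
  qed
  ultimately show ?thesis by simp
qed

lemma abel_bound:
  fixes T g :: "nat \<Rightarrow> real"
  assumes "1 \<le> A" "A \<le> B"
    and Tb: "\<And>k. k \<le> B \<Longrightarrow> \<bar>T k\<bar> \<le> e"
    and gb: "\<And>k. A \<le> k \<Longrightarrow> k \<le> B \<Longrightarrow> \<bar>g k\<bar> \<le> M"
    and mono: "(\<forall>k. A \<le> k \<and> k < B \<longrightarrow> g (Suc k) \<le> g k) \<or> (\<forall>k. A \<le> k \<and> k < B \<longrightarrow> g k \<le> g (Suc k))"
  shows "\<bar>\<Sum>k=A..B. (T k - T (k-1)) * g k\<bar> \<le> 4 * e * M"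
proof -
  have e0: "e \<ge> 0" using Tb[of 0] by auto
  have M0: "M \<ge> 0" using gb[of A] assms(2) by fastforce
  have "\<bar>\<Sum>k=A..<B. T k * (g k - g (Suc k))\<bar> \<le> (\<Sum>k=A..<B. \<bar>T k * (g k - g (Suc k))\<bar>)"
    by (rule sum_abs)
  also have "\<dots> \<le> (\<Sum>k=A..<B. e * \<bar>g k - g (Suc k)\<bar>)"
    by (intro sum_mono) (auto simp: abs_mult intro!: mult_right_mono Tb)
  also have "\<dots> = e * \<bar>g A - g B\<bar>" using var_sum[OF assms(2) mono] by (simp add: sum_distrib_left[symmetric])
  also have "\<dots> \<le> e * (2 * M)"
  proof -
    have "\<bar>g A\<bar> \<le> M" "\<bar>g B\<bar> \<le> M" using gb assms(2) by auto
    then show ?thesis using e0 by (intro mult_left_mono) auto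
  qed
  finally have 1: "\<bar>\<Sum>k=A..<B. T k * (g k - g (Suc k))\<bar> \<le> e * (2 * M)" .
  have 2: "\<bar>T B * g B\<bar> \<le> e * M" using Tb[of B] gb[of B] assms by (simp add: abs_mult mult_mono e0)
  have 3: "\<bar>T (A-1) * g A\<bar> \<le> e * M" using Tb[of "A-1"] gb[of A] assms by (simp add: abs_mult mult_mono e0)
  show ?thesis unfolding abel_sum[OF assms(1,2)] using 1 2 3 by linarith
qed

lemma G_mono:
  fixes \<sigma> x y :: real
  assumes "x \<le> y" "y < 1"
  shows "(\<sigma> \<ge> 1 \<longrightarrow> (1 - y) powr (\<sigma> - 1) \<le> (1 - x) powr (\<sigma> - 1)) \<and>
         (\<sigma> < 1 \<longrightarrow> (1 - x) powr (\<sigma> - 1) \<le> (1 - y) powr (\<sigma> - 1))"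
proof (intro conjI impI)
  assume "\<sigma> \<ge> 1" then show "(1 - y) powr (\<sigma> - 1) \<le> (1 - x) powr (\<sigma> - 1)"
    using assms by (intro powr_mono2) auto
next
  assume "\<sigma> < 1" then show "(1 - x) powr (\<sigma> - 1) \<le> (1 - y) powr (\<sigma> - 1)"
    using assms by (intro powr_mono2') auto
qed

lemma mvt_step:
  fixes \<sigma> a b :: real
  assumes "a < b" "b < 1"
  shows "\<bar>((1 - a) powr \<sigma> - (1 - b) powr \<sigma>) - \<sigma> * (b - a) * (1 - a) powr (\<sigma> - 1)\<bar>
          \<le> \<bar>\<sigma>\<bar> * (b - a) * \<bar>(1 - b) powr (\<sigma> - 1) - (1 - a) powr (\<sigma> - 1)\<bar>"
proof -
  have der: "DERIV (\<lambda>x. (1 - x) powr \<sigma>) x :> - \<sigma> * (1 - x) powr (\<sigma> - 1)" if "x \<le> b" for x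
  proof -
    have "1 - x > 0" using that assms by auto
    then show ?thesis
      by (auto intro!: derivative_eq_intros simp: field_simps)
  qed
  obtain z where z: "a < z" "z < b" "(1 - b) powr \<sigma> - (1 - a) powr \<sigma> = (b - a) * (- \<sigma> * (1 - z) powr (\<sigma> - 1))"
    using MVT2[OF assms(1), of "\<lambda>x. (1 - x) powr \<sigma>" "\<lambda>x. - \<sigma> * (1 - x) powr (\<sigma> - 1)"] der by auto
  let ?G = "\<lambda>x::real. (1 - x) powr (\<sigma> - 1)"
  have btw: "\<bar>?G z - ?G a\<bar> \<le> \<bar>?G b - ?G a\<bar>"
    using G_mono[of a z \<sigma>] G_mono[of z b \<sigma>] z assms by (cases "\<sigma> \<ge> 1") auto
  have "((1 - a) powr \<sigma> - (1 - b) powr \<sigma>) - \<sigma> * (b - a) * ?G a = \<sigma> * (b - a) * (?G z - ?G a)"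
    using z(3) by (simp add: algebra_simps)
  then have "\<bar>((1 - a) powr \<sigma> - (1 - b) powr \<sigma>) - \<sigma> * (b - a) * ?G a\<bar> = \<bar>\<sigma>\<bar> * (b - a) * \<bar>?G z - ?G a\<bar>"
    using assms by (simp add: abs_mult)
  also have "\<dots> \<le> \<bar>\<sigma>\<bar> * (b - a) * \<bar>?G b - ?G a\<bar>"
    using btw assms by (intro mult_left_mono) auto
  finally show ?thesis .
qed

lemma small_o_bound:
  fixes T :: "nat \<Rightarrow> real"
  assumes lim: "(\<lambda>n. T n / real n) \<longlonglongrightarrow> 0" and "\<epsilon> > 0"
  shows "eventually (\<lambda>n. \<forall>k\<le>n. \<bar>T k\<bar> \<le> \<epsilon> * real n) sequentially"
proof -
  have "eventually (\<lambda>n. \<bar>T n / real n\<bar> < \<epsilon>/2) sequentially"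
  proof -
    have H: "\<forall>e>0. eventually (\<lambda>n. dist (T n / real n) 0 < e) sequentially"
      using lim by (simp only: tendsto_iff)
    have "eventually (\<lambda>n. dist (T n / real n) 0 < \<epsilon>/2) sequentially"
      using H[rule_format, OF half_gt_zero[OF \<open>\<epsilon> > 0\<close>]] .
    then show ?thesis by (simp add: dist_real_def)
  qed
  then obtain N where N: "\<And>k. k \<ge> N \<Longrightarrow> \<bar>T k / real k\<bar> < \<epsilon>/2"
    by (auto simp: eventually_sequentially)
  define C where "C = (\<Sum>k<N+1. \<bar>T k\<bar>)"
  have C: "\<bar>T k\<bar> \<le> C" if "k \<le> N" for k
    unfolding C_def using that by (intro member_le_sum) auto
  have Nk: "\<bar>T k\<bar> \<le> \<epsilon>/2 * real k" if "k \<ge> N" "k \<ge> 1" for k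
  proof -
    have "\<bar>T k\<bar> / real k < \<epsilon>/2" using N[OF that(1)] by (simp add: abs_div)
    then show ?thesis using that by (simp add: field_simps)
  qed
  obtain M :: nat where M: "real M \<ge> 2 * C / \<epsilon>" using real_arch_simple by blast
  show ?thesis unfolding eventually_sequentially
  proof (intro exI[of _ "max M (N+1)"] allI impI)
    fix n k assume n: "max M (N+1) \<le> n" and k: "k \<le> n"
    have Cn: "C \<le> \<epsilon>/2 * real n"
    proof -
      have "real M \<le> real n" using n by simp
      then have "2 * C / \<epsilon> \<le> real n" using M by linarith
      then show ?thesis using \<open>\<epsilon> > 0\<close> by (simp add: field_simps)
    qed
    show "\<bar>T k\<bar> \<le> \<epsilon> * real n"
    proof (cases "k \<le> N")
      case True
      have "0 \<le> \<epsilon>/2 * real n" using \<open>\<epsilon> > 0\<close> by simp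
      then show ?thesis using C[OF True] Cn by linarith
    next
      case False
      then have "\<bar>T k\<bar> \<le> \<epsilon>/2 * real k" using Nk[of k] by simp
      also have "\<dots> \<le> \<epsilon>/2 * real n" using k \<open>\<epsilon> > 0\<close> by simp
      also have "\<dots> \<le> \<epsilon> * real n" using \<open>\<epsilon> > 0\<close> by simp
      finally show ?thesis .
    qed
  qed
qed

lemma lim_by_recip:
  fixes x :: "nat \<Rightarrow> real"
  assumes "eventually (\<lambda>n. \<bar>x n - c\<bar> \<le> 1 / real n) sequentially"
  shows "x \<longlonglongrightarrow> c"
proof -
  have "(\<lambda>n. x n - c) \<longlonglongrightarrow> 0"
    by (rule Lim_null_comparison[OF _ lim_const_over_n[of 1]]) (use assms in auto)
  then have "(\<lambda>n. (x n - c) + c) \<longlonglongrightarrow> 0 + c" by (intro tendsto_add) auto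
  then show ?thesis by simp
qed

theorem lemma2p8:
  fixes s :: "nat \<Rightarrow> real" and \<sigma> \<gamma> \<delta> :: real
  assumes nonneg: "\<And>k. k \<ge> 1 \<Longrightarrow> s k \<ge> 0"
    and mean: "(\<lambda>n. (\<Sum>k=1..n. s k) / real n) \<longlonglongrightarrow> \<sigma>"
    and "0 \<le> \<gamma>" and "\<gamma> < \<delta>" and "\<delta> < 1"
  shows "(\<lambda>n. (\<Sum>k\<in>{k. 1 \<le> k \<and> \<lceil>\<gamma> * real n\<rceil> \<le> int k \<and> int k \<le> \<lfloor>\<delta> * real n\<rfloor>}.
              s k * (1 - real k / real n) powr (\<sigma> - 1)) / real n)
         \<longlonglongrightarrow> (1 - \<gamma>) powr \<sigma> - (1 - \<delta>) powr \<sigma>"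
proof -
  define G where "G = (\<lambda>x::real. (1 - x) powr (\<sigma> - 1))"
  define F where "F = (\<lambda>x::real. (1 - x) powr \<sigma>)"
  define T where "T = (\<lambda>k. (\<Sum>j=1..k. s j) - \<sigma> * real k)"
  define A where "A = (\<lambda>n::nat. max 1 (nat \<lceil>\<gamma> * real n\<rceil>))"
  define B where "B = (\<lambda>n::nat. nat \<lfloor>\<delta> * real n\<rfloor>)"
  define d where "d = (1 + \<delta>) / 2"
  define M where "M = max 1 ((1 - d) powr (\<sigma> - 1))"
  have d: "\<delta> < d" "d < 1" using assms unfolding d_def by auto
  have M1: "M \<ge> 1" unfolding M_def by simp
  have Gb: "\<bar>G x\<bar> \<le> M" if "0 \<le> x" "x \<le> d" for x
  proof (cases "\<sigma> \<ge> 1")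
    case True
    have "G x \<le> 1 powr (\<sigma> - 1)" unfolding G_def using that d True by (intro powr_mono2) auto
    then show ?thesis unfolding M_def G_def by simp
  next
    case False
    have "G x \<le> (1 - d) powr (\<sigma> - 1)" unfolding G_def using that d False by (intro powr_mono2') auto
    then show ?thesis unfolding M_def G_def by simp
  qed
  have Gmono: "(\<sigma> \<ge> 1 \<longrightarrow> G y \<le> G x) \<and> (\<sigma> < 1 \<longrightarrow> G x \<le> G y)" if "x \<le> y" "y < 1" for x y
    unfolding G_def using G_mono[OF that] .
  have sT: "s k = \<sigma> + (T k - T (k - 1))" if "k \<ge> 1" for k
  proof -
    define j where "j = k - 1"
    have j: "k = Suc j" using that unfolding j_def by simp
    show ?thesis unfolding T_def j by (simp add: sum.cl_ivl_Suc algebra_simps)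
  qed
  have Tlim: "(\<lambda>n. T n / real n) \<longlonglongrightarrow> 0"
  proof -
    have "(\<lambda>n. (\<Sum>k=1..n. s k) / real n - \<sigma>) \<longlonglongrightarrow> \<sigma> - \<sigma>" by (intro tendsto_diff mean tendsto_const)
    moreover have "eventually (\<lambda>n. (\<Sum>k=1..n. s k) / real n - \<sigma> = T n / real n) sequentially"
      unfolding eventually_sequentially T_def by (intro exI[of _ 1]) (auto simp: field_simps)
    ultimately show ?thesis using Lim_transform_eventually by fastforce
  qed
  obtain N0 :: nat where N0: "real N0 \<ge> 1 / (\<delta> - \<gamma>) + 2 / (1 - \<delta>) + 1" using real_arch_simple by blast
  have big: "0 < n \<and> 1 \<le> A n \<and> A n \<le> B n \<and> real (B n) + 1 \<le> d * real n \<and>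
       {k. 1 \<le> k \<and> \<lceil>\<gamma> * real n\<rceil> \<le> int k \<and> int k \<le> \<lfloor>\<delta> * real n\<rfloor>} = {A n..B n} \<and>
       \<bar>real (A n) / real n - \<gamma>\<bar> \<le> 1 / real n \<and> \<bar>(real (B n) + 1) / real n - \<delta>\<bar> \<le> 1 / real n"
    if n: "n \<ge> N0" for n
  proof -
    have p1: "1 / (\<delta> - \<gamma>) > 0" "2 / (1 - \<delta>) > 0" using assms by auto
    have nN: "real n \<ge> real N0" using n by simp
    have n0: "real n > 0" using N0 p1 nN by linarith
    have h1: "real n \<ge> 1 / (\<delta> - \<gamma>)" using N0 p1 nN by linarith
    have h2: "real n \<ge> 2 / (1 - \<delta>)" using N0 p1 nN by linarith
    have g1: "\<gamma> * real n + 1 \<le> \<delta> * real n" using h1 assms n0 by (simp add: field_simps)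
    have g2: "\<delta> * real n + 1 \<le> d * real n" using h2 assms n0 unfolding d_def by (simp add: field_simps)
    have c1: "\<gamma> * real n \<le> of_int \<lceil>\<gamma> * real n\<rceil>" "of_int \<lceil>\<gamma> * real n\<rceil> < \<gamma> * real n + 1"
      by (simp_all add: ceiling_correct) linarith
    have f1: "of_int \<lfloor>\<delta> * real n\<rfloor> \<le> \<delta> * real n" "\<delta> * real n < of_int \<lfloor>\<delta> * real n\<rfloor> + 1"
      by (simp_all add: floor_correct)
    have gn: "0 \<le> \<gamma> * real n" using assms(3) by simp
    have cg0: "\<lceil>\<gamma> * real n\<rceil> \<ge> 0" using gn by (simp; linarith)
    have fd0: "\<lfloor>\<delta> * real n\<rfloor> \<ge> 1" using g1 gn by (simp add: le_floor_iff)
    have rA: "real (A n) = max 1 (of_int \<lceil>\<gamma> * real n\<rceil>)" unfolding A_def using cg0 by simp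
    have rB: "real (B n) = of_int \<lfloor>\<delta> * real n\<rfloor>" unfolding B_def using fd0 by simp
    have AB: "real (A n) \<le> real (B n)"
    proof -
      have "of_int \<lceil>\<gamma> * real n\<rceil> < of_int \<lfloor>\<delta> * real n\<rfloor> + (1::real)" using c1 f1 g1 by linarith
      then have "\<lceil>\<gamma> * real n\<rceil> \<le> \<lfloor>\<delta> * real n\<rfloor>" by linarith
      then show ?thesis unfolding rA rB using fd0 by simp
    qed
    have set: "{k. 1 \<le> k \<and> \<lceil>\<gamma> * real n\<rceil> \<le> int k \<and> int k \<le> \<lfloor>\<delta> * real n\<rfloor>} = {A n..B n}"
    proof -
      have i1: "(\<lceil>\<gamma> * real n\<rceil> \<le> int k) = (nat \<lceil>\<gamma> * real n\<rceil> \<le> k)" for k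
        by (simp only: nat_le_iff)
      have i2: "(int k \<le> \<lfloor>\<delta> * real n\<rfloor>) = (k \<le> nat \<lfloor>\<delta> * real n\<rfloor>)" for k
        using le_nat_iff[of "\<lfloor>\<delta> * real n\<rfloor>" k] fd0 by linarith
      show ?thesis unfolding A_def B_def i1 i2 by auto
    qed
    have e1: "\<bar>real (A n) / real n - \<gamma>\<bar> \<le> 1 / real n"
    proof -
      have "\<gamma> * real n \<le> real (A n)" unfolding rA
        using le_of_int_ceiling[of "\<gamma> * real n"] max.cobounded2 order_trans by blast
      moreover have "real (A n) \<le> \<gamma> * real n + 1" unfolding rA using c1 gn by auto
      ultimately
      have "\<bar>real (A n) - \<gamma> * real n\<bar> \<le> 1" by linarith
      then have "\<bar>real (A n) - \<gamma> * real n\<bar> / real n \<le> 1 / real n" using n0 by (simp add: divide_right_mono)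
      moreover have "real (A n) / real n - \<gamma> = (real (A n) - \<gamma> * real n) / real n" using n0 by (simp add: field_simps)
      ultimately show ?thesis by (simp add: abs_div)
    qed
    have e2: "\<bar>(real (B n) + 1) / real n - \<delta>\<bar> \<le> 1 / real n"
    proof -
      have "\<bar>real (B n) + 1 - \<delta> * real n\<bar> \<le> 1" unfolding rB using f1 by linarith
      then have "\<bar>real (B n) + 1 - \<delta> * real n\<bar> / real n \<le> 1 / real n" using n0 by (simp add: divide_right_mono)
      moreover have "(real (B n) + 1) / real n - \<delta> = (real (B n) + 1 - \<delta> * real n) / real n" using n0 by (simp add: field_simps)
      ultimately show ?thesis by (simp add: abs_div)
    qed
    show ?thesis using n0 AB set e1 e2 g2 f1 unfolding rB[symmetric] by (auto simp: A_def)
  qed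

  have kd: "real k / real n \<le> d" if "n \<ge> N0" "k \<le> B n + 1" for n k
  proof -
    have "real k \<le> real (B n) + 1" using that(2) by simp
    then have "real k \<le> d * real n" using big[OF that(1)] by linarith
    then show ?thesis using big[OF that(1)] by (simp add: field_simps)
  qed
  have kd1: "real k / real n < 1" if "n \<ge> N0" "k \<le> B n + 1" for n k
    using kd[OF that] d by linarith
  have Gmono_n: "(\<forall>k. A n \<le> k \<and> k < C \<longrightarrow> G (real (Suc k) / real n) \<le> G (real k / real n)) \<or>
                 (\<forall>k. A n \<le> k \<and> k < C \<longrightarrow> G (real k / real n) \<le> G (real (Suc k) / real n))"
    if "n \<ge> N0" "C \<le> B n + 1" for n C
  proof (cases "\<sigma> \<ge> 1")
    case True
    show ?thesis
    proof (rule disjI1, intro allI impI)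
      fix k assume k: "A n \<le> k \<and> k < C"
      have "real k / real n \<le> real (Suc k) / real n" using big[OF that(1)] by (simp add: divide_right_mono)
      then show "G (real (Suc k) / real n) \<le> G (real k / real n)"
        using Gmono[of "real k / real n" "real (Suc k) / real n"] kd1[OF that(1), of "Suc k"] k that(2) True by auto
    qed
  next
    case False
    show ?thesis
    proof (rule disjI2, intro allI impI)
      fix k assume k: "A n \<le> k \<and> k < C"
      have "real k / real n \<le> real (Suc k) / real n" using big[OF that(1)] by (simp add: divide_right_mono)
      then show "G (real k / real n) \<le> G (real (Suc k) / real n)"
        using Gmono[of "real k / real n" "real (Suc k) / real n"] kd1[OF that(1), of "Suc k"] k that(2) False by auto
    qed
  qed
  define P1 where "P1 = (\<lambda>n. (\<Sum>k=A n..B n. \<sigma> * G (real k / real n)) / real n)"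
  define P2 where "P2 = (\<lambda>n. (\<Sum>k=A n..B n. (T k - T (k - 1)) * G (real k / real n)) / real n)"
  define D where "D = (\<lambda>n. P1 n - (F (real (A n) / real n) - F ((real (B n) + 1) / real n)))"
  have split: "eventually (\<lambda>n. P1 n + P2 n = (\<Sum>k\<in>{k. 1 \<le> k \<and> \<lceil>\<gamma> * real n\<rceil> \<le> int k \<and> int k \<le> \<lfloor>\<delta> * real n\<rfloor>}.
              s k * (1 - real k / real n) powr (\<sigma> - 1)) / real n) sequentially"
    unfolding eventually_sequentially
  proof (intro exI[of _ N0] allI impI)
    fix n assume n: "n \<ge> N0"
    have "(\<Sum>k\<in>{A n..B n}. s k * (1 - real k / real n) powr (\<sigma> - 1)) =
          (\<Sum>k\<in>{A n..B n}. \<sigma> * G (real k / real n) + (T k - T (k - 1)) * G (real k / real n))"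
    proof (intro sum.cong refl)
      fix k assume "k \<in> {A n..B n}"
      then have "k \<ge> 1" using big[OF n] by auto
      then show "s k * (1 - real k / real n) powr (\<sigma> - 1) = \<sigma> * G (real k / real n) + (T k - T (k - 1)) * G (real k / real n)"
        unfolding G_def by (subst sT[OF \<open>k \<ge> 1\<close>]) (simp add: algebra_simps)
    qed
    then show "P1 n + P2 n = (\<Sum>k\<in>{k. 1 \<le> k \<and> \<lceil>\<gamma> * real n\<rceil> \<le> int k \<and> int k \<le> \<lfloor>\<delta> * real n\<rfloor>}.
              s k * (1 - real k / real n) powr (\<sigma> - 1)) / real n"
      unfolding P1_def P2_def big[OF n, THEN conjunct2, THEN conjunct2, THEN conjunct2, THEN conjunct2, THEN conjunct1]
      by (simp add: sum.distrib add_divide_distrib)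
  qed
  have P2lim: "P2 \<longlonglongrightarrow> 0"
    unfolding tendsto_iff
  proof (intro allI impI)
    fix e :: real assume e: "e > 0"
    define \<epsilon> where "\<epsilon> = e / (8 * M)"
    have \<epsilon>: "\<epsilon> > 0" unfolding \<epsilon>_def using e M1 by simp
    have ev: "eventually (\<lambda>n. \<forall>k\<le>n. \<bar>T k\<bar> \<le> \<epsilon> * real n) sequentially"
      by (rule small_o_bound[OF Tlim \<epsilon>])
    moreover have "eventually (\<lambda>n. n \<ge> N0) sequentially" by (rule eventually_ge_at_top)
    ultimately show "eventually (\<lambda>n. dist (P2 n) 0 < e) sequentially"
    proof eventually_elim
      case (elim n)
      note n = elim(2)
      have Bn: "B n \<le> n"
      proof -
        have "real (B n) \<le> real n" using big[OF n] d by (smt (verit) mult_right_mono of_nat_0_le_iff mult_left_le_one_le)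
        then show ?thesis by simp
      qed
      have bnd: "\<bar>\<Sum>k=A n..B n. (T k - T (k - 1)) * G (real k / real n)\<bar> \<le> 4 * (\<epsilon> * real n) * M"
      proof (rule abel_bound)
        show "1 \<le> A n" "A n \<le> B n" using big[OF n] by auto
        show "\<bar>T k\<bar> \<le> \<epsilon> * real n" if "k \<le> B n" for k using elim(1) that Bn by auto
        show "\<bar>G (real k / real n)\<bar> \<le> M" if "A n \<le> k" "k \<le> B n" for k
          using Gb kd[OF n, of k] that by simp
        show "(\<forall>k. A n \<le> k \<and> k < B n \<longrightarrow> G (real (Suc k) / real n) \<le> G (real k / real n)) \<or>
              (\<forall>k. A n \<le> k \<and> k < B n \<longrightarrow> G (real k / real n) \<le> G (real (Suc k) / real n))"
          using Gmono_n[OF n, of "B n"] by simp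
      qed
      have "4 * (\<epsilon> * real n) * M = e / 2 * real n" unfolding \<epsilon>_def using M1 by (simp add: field_simps)
      then have b2: "\<bar>\<Sum>k=A n..B n. (T k - T (k - 1)) * G (real k / real n)\<bar> \<le> e / 2 * real n"
        using bnd by linarith
      have n0: "real n > 0" using big[OF n] by simp
      have "\<bar>P2 n\<bar> = \<bar>\<Sum>k=A n..B n. (T k - T (k - 1)) * G (real k / real n)\<bar> / real n"
        unfolding P2_def by (simp add: abs_div)
      also have "\<dots> \<le> e / 2" using b2 n0 by (simp add: pos_divide_le_eq)
      finally have "\<bar>P2 n\<bar> \<le> e / 2" .
      then show ?case using e by simp
    qed
  qed
  have Dbound: "eventually (\<lambda>n. norm (D n) \<le> (\<bar>\<sigma>\<bar> * (2 * M)) / real n) sequentially"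
    unfolding eventually_sequentially
  proof (intro exI[of _ N0] allI impI)
    fix n assume n: "n \<ge> N0"
    have n0: "real n > 0" and AB: "A n \<le> B n" using big[OF n] by auto
    define h where "h = (\<lambda>k. G (real k / real n))"
    have ivl: "{A n..B n} = {A n..<Suc (B n)}" by auto
    have tele: "F (real (A n) / real n) - F ((real (B n) + 1) / real n) =
                (\<Sum>k=A n..B n. F (real k / real n) - F (real (Suc k) / real n))"
    proof -
      have "(\<Sum>k=A n..<Suc (B n). (\<lambda>k. - F (real k / real n)) (Suc k) - (\<lambda>k. - F (real k / real n)) k)
              = - F (real (Suc (B n)) / real n) - - F (real (A n) / real n)"
        by (rule sum_Suc_diff') (use AB in simp)
      then show ?thesis unfolding ivl by (simp add: algebra_simps)
    qed
    have "D n = (\<Sum>k=A n..B n. \<sigma> * (real (Suc k) / real n - real k / real n) * G (real k / real n)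
                   - (F (real k / real n) - F (real (Suc k) / real n)))"
    proof -
      have "P1 n = (\<Sum>k=A n..B n. \<sigma> * (real (Suc k) / real n - real k / real n) * G (real k / real n))"
        unfolding P1_def sum_divide_distrib using n0 by (intro sum.cong refl) (simp add: field_simps)
      then show ?thesis unfolding D_def tele by (simp add: sum_subtractf)
    qed
    then have "norm (D n) \<le> (\<Sum>k=A n..B n. \<bar>\<sigma> * (real (Suc k) / real n - real k / real n) * G (real k / real n)
                   - (F (real k / real n) - F (real (Suc k) / real n))\<bar>)"
      by (simp add: sum_abs)
    also have "\<dots> \<le> (\<Sum>k=A n..B n. \<bar>\<sigma>\<bar> * (1 / real n) * \<bar>h k - h (Suc k)\<bar>)"
    proof (rule sum_mono)
      fix k assume k: "k \<in> {A n..B n}"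
      have lt: "real k / real n < real (Suc k) / real n" using n0 by (simp add: divide_strict_right_mono)
      have lt1: "real (Suc k) / real n < 1" using kd1[OF n, of "Suc k"] k by simp
      have eq: "real (Suc k) / real n - real k / real n = 1 / real n" by (simp add: diff_divide_distrib[symmetric])
      show "\<bar>\<sigma> * (real (Suc k) / real n - real k / real n) * G (real k / real n)
                   - (F (real k / real n) - F (real (Suc k) / real n))\<bar> \<le> \<bar>\<sigma>\<bar> * (1 / real n) * \<bar>h k - h (Suc k)\<bar>"
        using mvt_step[OF lt lt1, of \<sigma>] unfolding eq h_def F_def G_def by (simp add: abs_minus_commute)
    qed
    also have "\<dots> = \<bar>\<sigma>\<bar> * (1 / real n) * (\<Sum>k=A n..<Suc (B n). \<bar>h k - h (Suc k)\<bar>)"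
      unfolding ivl by (rule sum_distrib_left[symmetric])
    also have "(\<Sum>k=A n..<Suc (B n). \<bar>h k - h (Suc k)\<bar>) = \<bar>h (A n) - h (Suc (B n))\<bar>"
      by (rule var_sum) (use AB Gmono_n[OF n, of "Suc (B n)"] in \<open>simp_all add: h_def\<close>)
    also have "\<bar>h (A n) - h (Suc (B n))\<bar> \<le> 2 * M"
    proof -
      have "\<bar>h (A n)\<bar> \<le> M" "\<bar>h (Suc (B n))\<bar> \<le> M"
        unfolding h_def using Gb kd[OF n, of "A n"] kd[OF n, of "Suc (B n)"] AB by simp_all
      then show ?thesis by linarith
    qed
    then have "\<bar>\<sigma>\<bar> * (1 / real n) * \<bar>h (A n) - h (Suc (B n))\<bar> \<le> \<bar>\<sigma>\<bar> * (1 / real n) * (2 * M)"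
      using n0 by (intro mult_left_mono) auto
    finally show "norm (D n) \<le> (\<bar>\<sigma>\<bar> * (2 * M)) / real n" by simp
  qed
  have Dlim: "D \<longlonglongrightarrow> 0" by (rule Lim_null_comparison[OF Dbound lim_const_over_n])
  have Alim: "(\<lambda>n. real (A n) / real n) \<longlonglongrightarrow> \<gamma>"
    by (rule lim_by_recip) (use big in \<open>auto simp: eventually_sequentially\<close>)
  have Blim: "(\<lambda>n. (real (B n) + 1) / real n) \<longlonglongrightarrow> \<delta>"
    by (rule lim_by_recip) (use big in \<open>auto simp: eventually_sequentially\<close>)
  have FA: "(\<lambda>n. F (real (A n) / real n)) \<longlonglongrightarrow> F \<gamma>"
    unfolding F_def by (rule tendsto_powr[OF tendsto_diff[OF tendsto_const Alim] tendsto_const]) (use assms in simp)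
  have FB: "(\<lambda>n. F ((real (B n) + 1) / real n)) \<longlonglongrightarrow> F \<delta>"
    unfolding F_def by (rule tendsto_powr[OF tendsto_diff[OF tendsto_const Blim] tendsto_const]) (use assms in simp)
  have "(\<lambda>n. (F (real (A n) / real n) - F ((real (B n) + 1) / real n)) + D n) \<longlonglongrightarrow> (F \<gamma> - F \<delta>) + 0"
    by (intro tendsto_add tendsto_diff FA FB Dlim)
  then have P1lim: "P1 \<longlonglongrightarrow> F \<gamma> - F \<delta>" unfolding D_def by simp
  have "(\<lambda>n. P1 n + P2 n) \<longlonglongrightarrow> (F \<gamma> - F \<delta>) + 0" by (intro tendsto_add P1lim P2lim)
  then show ?thesis using Lim_transform_eventually[OF _ split] unfolding F_def by simp
qed

end
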